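(* Let $u^h$ be the solutions of the hybrid discrete problem and $u^*,u_*$ their upper and lower half-relaxed limits. Then at every regular point $x\in\Omega_r$, $u_*(x)=u^*(x)=u(x)$, and consequently $u_*$ and $u^*$ are viscosity solutions at $x$ of $\det D^2w=f$ together with $\max(-\lambda_1[w],0)=0$.
   Context: Setting. Let $n\ge 2$, $\Omega=(0,1)^n$, $f\in C(\overline\Omega)$ with $f>0$, and $g\in C(\partial\Omega)$ admitting a convex extension $\tilde g\in C(\overline\Omega)$. Let $u$ be the unique convex viscosity solution of $\det D^2u=f$ in $\Omega$, $u=g$ on $\partial\Omega$. Let $h>0$ with $1/h\in\mathbb Z$, $\mathbb Z_h=\{x\in\mathbb R^n: x_i/h\in\mathbb Z\ \forall i\}$, $\Omega^h=\overline\Omega\cap\mathbb Z_h$, $\Omega^h_0=\Omega\cap\mathbb Z_h$, $\partial\Omega^h=\Omega^h\setminus\Omega^h_0$; $r_h(v)$ is the restriction of a function $v$ to the grid. With $e^i$ the unit vectors, $\partial^i_+v^h(x)=(v^h(x+he^i)-v^h(x))/h$, $\partial^i_-v^h(x)=(v^h(x)-v^h(x-he^i))/h$, $D_hv^h=(\partial^i_+v^h)_i$, $\operatorname{div}_h(v^{h,i})_i=\sum_i\partial^i_-v^{h,i}$, and the discrete Hessian $\mathcal H_dv^h=(\partial^j_-\partial^i_+v^h)_{i,j}$. A point $x\in\Omega$ is regular if $u$ is $C^2$ in a neighborhood of $x$. Let $\Omega_r\subset\Omega$ be an open bounded convex set consisting of regular points. Put $\Omega_r^h=\overline{\Omega_r}\cap\mathbb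 Z_h$, let $\Omega^h_{r,0}$ be the set of $x\in\Omega_r^h$ at which $\mathcal H_dv^h(x)$ is defined using only values at points of $\Omega_r^h$, and $\Omega_s^h=\Omega^h_0\setminus\Omega^h_{r,0}$. Define $M_r[v^h]=\frac1n\operatorname{div}_h[(\operatorname{cof}\operatorname{sym}\mathcal H_dv^h)^TD_hv^h]$. For $x\in\Omega_0^h$ let $W_h(x)$ be the set of orthogonal bases $(\alpha_1,\dots,\alpha_n)$ of $\mathbb R^n$ with $x\pm\alpha_i\in\Omega^h$, and $M_s^+[v^h](x)=\inf_{W_h(x)}\prod_{i=1}^n\max\big(\frac{v^h(x+\alpha_i)-2v^h(x)+v^h(x-\alpha_i)}{|\alpha_i|^2},0\big)$. The hybrid operator is $F_h(v^h)(x)=M_s^+[v^h](x)-f(x)$ on $\Omega_s^h$ and $F_h(v^h)(x)=M_r[v^h](x)-f(x)$ on $\Omega^h_{r,0}$; the hybrid discrete problem is $F_h(u^h)=0$ on $\Omega^h_0$, $u^h=r_h(g)$ on $\partial\Omega^h$, and $u^h$ denotes its solution in $\{v^h: |v^h-r_h(u)|_{1,h}\le C_*h^{2+n/2},\ v^h=r_h(g)\text{ on }\partial\Omega^h,\ v^h=r_h(u)\text{ on }\Omega_r^h\setminus\Omega^h_{r,0}\}$ for a fixed constant $C_*$ and $h$ small, where $|v^h|_{1,h}=(h^n\sum_i\sum_{x\in\Omega^h_{r,0}}(\partial^i_+v^h(x))^2)^{1/2}$. The half-relaxed limits are $u^*(x)=\lim_{\delta\to0}\sup\{u^h(y): y\in\Omega^h_0,|y-x|\le\delta,0<h\le\delta\}$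 and $u_*(x)=\lim_{\delta\to0}\inf\{u^h(y): y\in\Omega^h_0,|y-x|\le\delta,0<h\le\delta\}$. $\lambda_1[w]$ denotes the smallest eigenvalue of the Hessian, understood in the viscosity sense. *)

theory Defs
  imports "HOL-Analysis.Analysis"
begin

definition Omega :: "(real^'n) set" where
  "Omega = {x. \<forall>i. 0 < x$i \<and> x$i < 1}"

text \<open>C2 test data on an open set S: Dphi is the gradient, Hphi the Hessian
  (Hphi y $ i $ j = second partial derivative in directions i then j), continuous.\<close>
definition C2_on :: "(real^'n) set \<Rightarrow> (real^'n \<Rightarrow> real) \<Rightarrow> (real^'n \<Rightarrow> real^'n)
                     \<Rightarrow> (real^'n \<Rightarrow> real^'n^'n) \<Rightarrow> bool" where
  "C2_on S phi Dphi Hphi \<longleftrightarrow> open S \<and>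
     (\<forall>y\<in>S. (phi has_derivative (\<lambda>v. Dphi y \<bullet> v)) (at y) \<and>
             (Dphi has_derivative (\<lambda>v. Hphi y *v v)) (at y)) \<and>
     continuous_on S Hphi"

definition psd :: "real^'n^'n \<Rightarrow> bool" where
  "psd A \<longleftrightarrow> (\<forall>v. 0 \<le> v \<bullet> (A *v v))"

definition lambda1 :: "real^'n^'n \<Rightarrow> real" where
  "lambda1 A = Min {l. \<exists>v. v \<noteq> 0 \<and> A *v v = l *\<^sub>R v}"

definition MA_visc_sub_at :: "(real^'n \<Rightarrow> real) \<Rightarrow> (real^'n \<Rightarrow> real) \<Rightarrow> real^'n \<Rightarrow> bool" where
  "MA_visc_sub_at f w x \<longleftrightarrow>
     (\<forall>S phi Dphi Hphi. x \<in> S \<and> C2_on S phi Dphi Hphi \<and> (\<forall>y\<in>S. w y - phi y \<le> w x - phi x)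
        \<longrightarrow> det (Hphi x) \<ge> f x)"

definition MA_visc_super_at :: "(real^'n \<Rightarrow> real) \<Rightarrow> (real^'n \<Rightarrow> real) \<Rightarrow> real^'n \<Rightarrow> bool" where
  "MA_visc_super_at f w x \<longleftrightarrow>
     (\<forall>S phi Dphi Hphi. x \<in> S \<and> C2_on S phi Dphi Hphi \<and> (\<forall>y\<in>S. w y - phi y \<ge> w x - phi x)
        \<and> psd (Hphi x) \<longrightarrow> det (Hphi x) \<le> f x)"

definition MA_visc_sol_at :: "(real^'n \<Rightarrow> real) \<Rightarrow> (real^'n \<Rightarrow> real) \<Rightarrow> real^'n \<Rightarrow> bool" where
  "MA_visc_sol_at f w x \<longleftrightarrow> MA_visc_sub_at f w x \<and> MA_visc_super_at f w x"

definition cvx_visc_sol_at :: "(real^'n \<Rightarrow> real) \<Rightarrow> real^'n \<Rightarrow> bool" where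
  "cvx_visc_sol_at w x \<longleftrightarrow>
     (\<forall>S phi Dphi Hphi. x \<in> S \<and> C2_on S phi Dphi Hphi \<and> (\<forall>y\<in>S. w y - phi y \<le> w x - phi x)
        \<longrightarrow> max (- lambda1 (Hphi x)) 0 \<le> 0) \<and>
     (\<forall>S phi Dphi Hphi. x \<in> S \<and> C2_on S phi Dphi Hphi \<and> (\<forall>y\<in>S. w y - phi y \<ge> w x - phi x)
        \<longrightarrow> max (- lambda1 (Hphi x)) 0 \<ge> 0)"

definition regular_point :: "(real^'n \<Rightarrow> real) \<Rightarrow> real^'n \<Rightarrow> bool" where
  "regular_point u x \<longleftrightarrow> x \<in> Omega \<and> (\<exists>S Du Hu. x \<in> S \<and> C2_on S u Du Hu)"

definition hN :: "nat \<Rightarrow> real" where "hN N = 1 / real N"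

definition grid :: "nat \<Rightarrow> (real^'n) set" where
  "grid N = {x. \<forall>i. \<exists>k::int. x$i = real_of_int k * hN N}"

definition Omh :: "nat \<Rightarrow> (real^'n) set" where "Omh N = closure Omega \<inter> grid N"
definition Omh0 :: "nat \<Rightarrow> (real^'n) set" where "Omh0 N = Omega \<inter> grid N"
definition bdh :: "nat \<Rightarrow> (real^'n) set" where "bdh N = Omh N - Omh0 N"

definition dplus :: "nat \<Rightarrow> 'n \<Rightarrow> (real^'n \<Rightarrow> real) \<Rightarrow> real^'n \<Rightarrow> real" where
  "dplus N i v x = (v (x + hN N *\<^sub>R axis i 1) - v x) / hN N"
definition dminus :: "nat \<Rightarrow> 'n \<Rightarrow> (real^'n \<Rightarrow> real) \<Rightarrow> real^'n \<Rightarrow> real" where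
  "dminus N i v x = (v x - v (x - hN N *\<^sub>R axis i 1)) / hN N"

definition Dh :: "nat \<Rightarrow> (real^'n \<Rightarrow> real) \<Rightarrow> real^'n \<Rightarrow> real^'n" where
  "Dh N v x = (\<chi> i. dplus N i v x)"

definition Hd :: "nat \<Rightarrow> (real^'n \<Rightarrow> real) \<Rightarrow> real^'n \<Rightarrow> real^'n^'n" where
  "Hd N v x = (\<chi> i j. dminus N j (dplus N i v) x)"

definition symm :: "real^'n^'n \<Rightarrow> real^'n^'n" where
  "symm A = (1/2) *\<^sub>R (A + transpose A)"

definition cof :: "real^'n^'n \<Rightarrow> real^'n^'n" where
  "cof A = (\<chi> i j. det (\<chi> k. if k = i then axis j 1 else A $ k))"

definition Mr :: "nat \<Rightarrow> (real^'n \<Rightarrow> real) \<Rightarrow> real^'n \<Rightarrow> real" where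
  "Mr N v x = (1 / real CARD('n)) *
     (\<Sum>i\<in>UNIV. dminus N i (\<lambda>y. (transpose (cof (symm (Hd N v y))) *v Dh N v y) $ i) x)"

definition Wh :: "nat \<Rightarrow> real^'n \<Rightarrow> ('n \<Rightarrow> real^'n) set" where
  "Wh N x = {a. (\<forall>i. a i \<noteq> 0) \<and> (\<forall>i j. i \<noteq> j \<longrightarrow> a i \<bullet> a j = 0) \<and>
                (\<forall>i. x + a i \<in> Omh N \<and> x - a i \<in> Omh N)}"

definition Ms_plus :: "nat \<Rightarrow> (real^'n \<Rightarrow> real) \<Rightarrow> real^'n \<Rightarrow> real" where
  "Ms_plus N v x = (INF a\<in>Wh N x. \<Prod>i\<in>UNIV.
       max ((v (x + a i) - 2 * v x + v (x - a i)) / (norm (a i))\<^sup>2) 0)"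

definition Omrh :: "nat \<Rightarrow> (real^'n) set \<Rightarrow> (real^'n) set" where
  "Omrh N Or = closure Or \<inter> grid N"

text \<open>Points where Hd v x only involves values at points of Omrh.\<close>
definition Omr0h :: "nat \<Rightarrow> (real^'n) set \<Rightarrow> (real^'n) set" where
  "Omr0h N Or = {x \<in> Omrh N Or. \<forall>i j.
      x + hN N *\<^sub>R axis i 1 \<in> Omrh N Or \<and> x - hN N *\<^sub>R axis j 1 \<in> Omrh N Or \<and>
      x + hN N *\<^sub>R axis i 1 - hN N *\<^sub>R axis j 1 \<in> Omrh N Or}"

definition Omsh :: "nat \<Rightarrow> (real^'n) set \<Rightarrow> (real^'n) set" where
  "Omsh N Or = Omh0 N - Omr0h N Or"

definition Fh :: "nat \<Rightarrow> (real^'n) set \<Rightarrow> (real^'n \<Rightarrow> real) \<Rightarrow> (real^'n \<Rightarrow> real) \<Rightarrow> real^'n \<Rightarrow> real" where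
  "Fh N Or f v x = (if x \<in> Omsh N Or then Ms_plus N v x - f x else Mr N v x - f x)"

definition norm1h :: "nat \<Rightarrow> (real^'n) set \<Rightarrow> (real^'n \<Rightarrow> real) \<Rightarrow> real" where
  "norm1h N Or v = sqrt (hN N ^ CARD('n) * (\<Sum>i\<in>UNIV. \<Sum>x\<in>Omr0h N Or. (dplus N i v x)\<^sup>2))"

text \<open>Upper / lower half-relaxed limits of the family U N (defined for N >= N0),
  the limit delta -> 0 of a monotone quantity being written as INF/SUP over delta > 0.\<close>
definition hrl_upper :: "nat \<Rightarrow> (nat \<Rightarrow> real^'n \<Rightarrow> real) \<Rightarrow> real^'n \<Rightarrow> ereal" where
  "hrl_upper N0 U x = (INF d\<in>{0<..}. SUP p\<in>{(N, y). N \<ge> N0 \<and> 0 < N \<and> hN N \<le> d \<and>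
       y \<in> Omh0 N \<and> dist y x \<le> d}. ereal (U (fst p) (snd p)))"

definition hrl_lower :: "nat \<Rightarrow> (nat \<Rightarrow> real^'n \<Rightarrow> real) \<Rightarrow> real^'n \<Rightarrow> ereal" where
  "hrl_lower N0 U x = (SUP d\<in>{0<..}. INF p\<in>{(N, y). N \<ge> N0 \<and> 0 < N \<and> hN N \<le> d \<and>
       y \<in> Omh0 N \<and> dist y x \<le> d}. ereal (U (fst p) (snd p)))"

end

theory Submission
  imports Defs
begin


lemma line_deriv1:
  assumes c2: "C2_on S phi Dphi Hphi" and y: "a + t *\<^sub>R v \<in> S"
  shows "((\<lambda>s. phi (a + s *\<^sub>R v)) has_real_derivative (Dphi (a + t *\<^sub>R v) \<bullet> v)) (at t)"
proof -
  have d: "(phi has_derivative (\<lambda>z. Dphi (a + t *\<^sub>R v) \<bullet> z)) (at (a + t *\<^sub>R v))"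
    using c2 y unfolding C2_on_def by blast
  have l: "((\<lambda>s. a + s *\<^sub>R v) has_derivative (\<lambda>s. s *\<^sub>R v)) (at t)"
    by (auto intro!: derivative_eq_intros)
  have "((\<lambda>s. phi (a + s *\<^sub>R v)) has_derivative (\<lambda>s. Dphi (a + t *\<^sub>R v) \<bullet> (s *\<^sub>R v))) (at t)"
    using has_derivative_compose[OF l d] by (simp add: o_def)
  then show ?thesis unfolding has_field_derivative_def
    by (simp add: inner_scaleR_right mult.commute[of _ "Dphi (a + t *\<^sub>R v) \<bullet> v"])
qed

lemma line_deriv2:
  assumes c2: "C2_on S phi Dphi Hphi" and y: "a + t *\<^sub>R v \<in> S"
  shows "((\<lambda>s. Dphi (a + s *\<^sub>R v) \<bullet> w) has_real_derivative ((Hphi (a + t *\<^sub>R v) *v v) \<bullet> w)) (at t)"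
proof -
  have d: "(Dphi has_derivative (\<lambda>z. Hphi (a + t *\<^sub>R v) *v z)) (at (a + t *\<^sub>R v))"
    using c2 y unfolding C2_on_def by blast
  have l: "((\<lambda>s. a + s *\<^sub>R v) has_derivative (\<lambda>s. s *\<^sub>R v)) (at t)"
    by (auto intro!: derivative_eq_intros)
  have "((\<lambda>s. Dphi (a + s *\<^sub>R v)) has_derivative (\<lambda>s. Hphi (a + t *\<^sub>R v) *v (s *\<^sub>R v))) (at t)"
    using has_derivative_compose[OF l d] by (simp add: o_def)
  then have "((\<lambda>s. Dphi (a + s *\<^sub>R v) \<bullet> w) has_derivative (\<lambda>s. (Hphi (a + t *\<^sub>R v) *v (s *\<^sub>R v)) \<bullet> w)) (at t)"
    by (rule has_derivative_inner_left)
  then show ?thesis unfolding has_field_derivative_def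
    by (simp add: matrix_vector_mult_scaleR mult.commute[of _ "(Hphi (a + t *\<^sub>R v) *v v) \<bullet> w"])
qed

lemma mvt_line1:
  assumes c2: "C2_on S phi Dphi Hphi" and t: "0 < t" and seg: "\<And>s. 0 \<le> s \<Longrightarrow> s \<le> t \<Longrightarrow> a + s *\<^sub>R v \<in> S"
  shows "\<exists>s. 0 < s \<and> s < t \<and> phi (a + t *\<^sub>R v) - phi a = t * (Dphi (a + s *\<^sub>R v) \<bullet> v)"
proof -
  have "\<And>s. 0 \<le> s \<Longrightarrow> s \<le> t \<Longrightarrow> ((\<lambda>s. phi (a + s *\<^sub>R v)) has_real_derivative (Dphi (a + s *\<^sub>R v) \<bullet> v)) (at s)"
    using line_deriv1[OF c2] seg by blast
  from MVT2[OF t this] show ?thesis by simp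
qed

lemma mvt_line2:
  assumes c2: "C2_on S phi Dphi Hphi" and t: "0 < t" and seg: "\<And>s. 0 \<le> s \<Longrightarrow> s \<le> t \<Longrightarrow> a + s *\<^sub>R v \<in> S"
  shows "\<exists>s. 0 < s \<and> s < t \<and> Dphi (a + t *\<^sub>R v) \<bullet> w - Dphi a \<bullet> w = t * ((Hphi (a + s *\<^sub>R v) *v v) \<bullet> w)"
proof -
  have "\<And>s. 0 \<le> s \<Longrightarrow> s \<le> t \<Longrightarrow> ((\<lambda>s. Dphi (a + s *\<^sub>R v) \<bullet> w) has_real_derivative ((Hphi (a + s *\<^sub>R v) *v v) \<bullet> w)) (at s)"
    using line_deriv2[OF c2] seg by blast
  from MVT2[OF t this] show ?thesis by simp
qed



lemma Q_linear: "linear (\<lambda>A::real^'n^'n. (A *v v) \<bullet> w)"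
  by (rule linearI) (simp_all add: matrix_vector_mult_add_rdistrib inner_add_left flip: scaleR_matrix_vector_assoc)

lemma Q_cont: "isCont (\<lambda>A::real^'n^'n. (A *v v) \<bullet> w) M"
  using Q_linear linear_continuous_at linear_conv_bounded_linear by blast

lemma isCont_H:
  assumes c2: "C2_on S phi Dphi Hphi" and y: "y \<in> S"
  shows "isCont Hphi y"
  using c2 y unfolding C2_on_def using continuous_on_eq_continuous_at by blast

lemma isCont_Hline:
  assumes c2: "C2_on S phi Dphi Hphi" and y: "a + t *\<^sub>R v \<in> S"
  shows "isCont (\<lambda>s. (Hphi (a + s *\<^sub>R v) *v v') \<bullet> w) t"
proof -
  have "isCont (\<lambda>s. a + s *\<^sub>R v) t" by (intro continuous_intros)
  moreover have "isCont Hphi (a + t *\<^sub>R v)" using isCont_H[OF c2 y] .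
  ultimately have "isCont (\<lambda>s. Hphi (a + s *\<^sub>R v)) t" using continuous_at_compose[of t "\<lambda>s. a + s *\<^sub>R v" Hphi]
    by (simp add: o_def)
  then show ?thesis using continuous_at_compose[of t "\<lambda>s. Hphi (a + s *\<^sub>R v)" "\<lambda>A. (A *v v') \<bullet> w"] Q_cont[where v=v' and w=w and M="Hphi (a + t *\<^sub>R v)"]
    by (simp add: o_def)
qed



lemma sym_eig_exists:
  fixes A :: "real^'n^'n"
  assumes symA: "\<And>v w. (A *v v) \<bullet> w = v \<bullet> (A *v w)"
  shows "\<exists>v l. v \<noteq> 0 \<and> A *v v = l *\<^sub>R v"
proof -
  let ?q = "\<lambda>v. v \<bullet> (A *v v)"
  have cq: "continuous_on (sphere 0 1) ?q"
    by (intro continuous_intros linear_continuous_on matrix_vector_mul_linear)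
  have ne: "sphere (0::real^'n) 1 \<noteq> {}" by simp
  obtain v0 where v0: "v0 \<in> sphere 0 1" and mn: "\<forall>y\<in>sphere 0 1. ?q v0 \<le> ?q y"
    using continuous_attains_inf[OF compact_sphere ne cq] by blast
  define l where "l = ?q v0"
  have nv0: "norm v0 = 1" using v0 by simp
  define B where "B = (\<lambda>v. A *v v - l *\<^sub>R v)"
  have psdB: "0 \<le> w \<bullet> B w" for w
  proof (cases "w = 0")
    case True then show ?thesis by (simp add: B_def)
  next
    case False
    let ?y = "(1/norm w) *\<^sub>R w"
    have "?y \<in> sphere 0 1" using False by simp
    then have "l \<le> ?q ?y" using mn l_def by blast
    also have "?q ?y = (1/norm w)^2 * ?q w"
      by (simp add: matrix_vector_mult_scaleR inner_scaleR_left inner_scaleR_right power2_eq_square)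
    finally have "l * (norm w)^2 \<le> ?q w" using False
      by (simp add: field_simps)
    moreover have "w \<bullet> (l *\<^sub>R w) = l * (norm w)^2" by (simp add: power2_norm_eq_inner)
    ultimately show ?thesis by (simp add: B_def inner_diff_right power2_norm_eq_inner)
  qed
  have B0: "v0 \<bullet> B v0 = 0"
    using nv0 by (simp add: B_def inner_diff_right l_def power2_norm_eq_inner[symmetric])
  have symB: "B v \<bullet> w = v \<bullet> B w" for v w
    using symA[of v w] by (simp add: B_def inner_diff_left inner_diff_right)
  have linB: "B (a + t *\<^sub>R b) = B a + t *\<^sub>R B b" for a b t
    by (simp add: B_def matrix_vector_right_distrib matrix_vector_mult_scaleR algebra_simps)
  let ?w = "B v0"
  have "0 \<le> (v0 - t *\<^sub>R ?w) \<bullet> B (v0 - t *\<^sub>R ?w)" for t using psdB by blast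
  moreover have "(v0 - t *\<^sub>R ?w) \<bullet> B (v0 - t *\<^sub>R ?w) = - 2 * t * (?w \<bullet> ?w) + t^2 * (?w \<bullet> B ?w)" for t
  proof -
    have e: "B (v0 - t *\<^sub>R ?w) = ?w - t *\<^sub>R B ?w" using linB[of v0 "-t" ?w] by simp
    have s: "v0 \<bullet> B ?w = ?w \<bullet> ?w" using symB[of v0 ?w] by simp
    show ?thesis unfolding e using B0 s
      by (simp add: inner_diff_left inner_diff_right power2_eq_square inner_commute algebra_simps)
  qed
  ultimately have ineq: "0 \<le> - 2 * t * (?w \<bullet> ?w) + t^2 * (?w \<bullet> B ?w)" for t by metis
  have "?w \<bullet> ?w = 0"
  proof (rule ccontr)
    assume h: "?w \<bullet> ?w \<noteq> 0"
    then have p: "?w \<bullet> ?w > 0" by (simp add: order_le_neq_trans)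
    define c where "c = ?w \<bullet> B ?w"
    have c0: "c \<ge> 0" using psdB c_def by blast
    define t where "t = (?w \<bullet> ?w) / (c + 1)"
    have t0: "t > 0" using p c0 by (simp add: t_def)
    have "0 \<le> - 2 * t * (?w \<bullet> ?w) + t^2 * c" using ineq c_def by simp
    then have "0 \<le> t * (- 2 * (?w \<bullet> ?w) + t * c)" by (simp add: power2_eq_square algebra_simps)
    then have "0 \<le> - 2 * (?w \<bullet> ?w) + t * c" using t0 by (simp add: zero_le_mult_iff)
    moreover have "t * c \<le> ?w \<bullet> ?w" unfolding t_def using p c0
      by (simp add: field_simps)
    ultimately show False using p by linarith
  qed
  then have "A *v v0 = l *\<^sub>R v0" by (simp add: B_def)
  moreover have "v0 \<noteq> 0" using nv0 by auto
  ultimately show ?thesis by blast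
qed

lemma sym_eig_finite:
  fixes A :: "real^'n^'n"
  assumes symA: "\<And>v w. (A *v v) \<bullet> w = v \<bullet> (A *v w)"
  shows "finite {l. \<exists>v. v \<noteq> 0 \<and> A *v v = l *\<^sub>R v}"
proof (rule ccontr)
  let ?E = "{l. \<exists>v. v \<noteq> 0 \<and> A *v v = l *\<^sub>R v}"
  assume "\<not> finite ?E"
  then obtain F where F: "finite F" "card F = Suc DIM(real^'n)" "F \<subseteq> ?E"
    using infinite_arbitrarily_large by blast
  define ev where "ev l = (SOME v. v \<noteq> 0 \<and> A *v v = l *\<^sub>R v)" for l
  have ev: "ev l \<noteq> 0 \<and> A *v ev l = l *\<^sub>R ev l" if "l \<in> F" for l
    using F(3) that unfolding ev_def by (smt (verit, best) mem_Collect_eq someI_ex subsetD)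
  have inj: "inj_on ev F"
  proof (rule inj_onI)
    fix a b assume a: "a \<in> F" and b: "b \<in> F" and e: "ev a = ev b"
    then have "a *\<^sub>R ev a = b *\<^sub>R ev a" using ev[OF a] ev[OF b] by metis
    then show "a = b" using ev[OF a] by (simp add: scaleR_cancel_right)
  qed
  have orth: "pairwise orthogonal (ev ` F)"
    unfolding pairwise_def
  proof (clarify)
    fix a b assume a: "a \<in> F" and b: "b \<in> F" and ne: "ev a \<noteq> ev b"
    then have ab: "a \<noteq> b" by auto
    have "(A *v ev a) \<bullet> ev b = ev a \<bullet> (A *v ev b)" by (rule symA)
    then have "a * (ev a \<bullet> ev b) = b * (ev a \<bullet> ev b)" using ev[OF a] ev[OF b] by simp
    then show "orthogonal (ev a) (ev b)" using ab unfolding orthogonal_def by simp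
  qed
  have "0 \<notin> ev ` F" using ev by auto
  then have "independent (ev ` F)" using pairwise_orthogonal_independent orth by blast
  then have "card (ev ` F) \<le> DIM(real^'n)" using independent_bound by blast
  moreover have "card (ev ` F) = card F" using card_image[OF inj] .
  ultimately show False using F(2) by simp
qed

lemma lambda1_nonneg:
  fixes A :: "real^'n^'n"
  assumes symA: "\<And>v w. (A *v v) \<bullet> w = v \<bullet> (A *v w)" and p: "psd A"
  shows "lambda1 A \<ge> 0"
proof -
  let ?E = "{l. \<exists>v. v \<noteq> 0 \<and> A *v v = l *\<^sub>R v}"
  have fin: "finite ?E" using sym_eig_finite[OF symA] .
  have ne: "?E \<noteq> {}" using sym_eig_exists[OF symA] by blast
  have "\<forall>l\<in>?E. l \<ge> 0"
  proof
    fix l assume "l \<in> ?E"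
    then obtain v where v: "v \<noteq> 0" "A *v v = l *\<^sub>R v" by blast
    have "0 \<le> v \<bullet> (A *v v)" using p unfolding psd_def by blast
    also have "\<dots> = l * (v \<bullet> v)" using v by simp
    finally have "0 \<le> l * (v \<bullet> v)" .
    moreover have "v \<bullet> v > 0" using v(1) by simp
    ultimately show "l \<ge> 0" by (simp add: zero_le_mult_iff)
  qed
  then show ?thesis unfolding lambda1_def using fin ne by simp
qed


lemma C2_open: "C2_on S phi Dphi Hphi \<Longrightarrow> open S" unfolding C2_on_def by blast

lemma psd_from_sd:
  assumes c2: "C2_on S phi Dphi Hphi" and x: "x \<in> S" and rho: "\<rho> > 0"
    and sd: "\<forall>z. norm z < \<rho> \<longrightarrow> 0 \<le> phi (x + z) + phi (x - z) - 2 * phi x"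
  shows "psd (Hphi x)"
  unfolding psd_def
proof
  fix v
  show "0 \<le> v \<bullet> (Hphi x *v v)"
  proof (rule ccontr)
    assume neg: "\<not> 0 \<le> v \<bullet> (Hphi x *v v)"
    then have v0: "v \<noteq> 0" by auto
    then have nv: "norm v > 0" by simp
    define k where "k = (\<lambda>s. (Hphi (x + s *\<^sub>R v) *v v) \<bullet> v)"
    have k0: "k 0 < 0" using neg by (simp add: k_def inner_commute)
    obtain r where r: "r > 0" "ball x r \<subseteq> S" using C2_open[OF c2] x openE by blast
    have cont: "isCont k 0" unfolding k_def using isCont_Hline[OF c2, of x 0 v v v] x by simp
    then have "(k \<longlongrightarrow> k 0) (at 0)" by (simp add: isCont_def)
    then have "eventually (\<lambda>s. k s < 0) (at 0)" using k0 by (simp add: order_tendstoD(2))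
    then obtain d where d: "d > 0" "\<And>s. s \<noteq> 0 \<Longrightarrow> dist s 0 < d \<Longrightarrow> k s < 0"
      unfolding eventually_at by blast
    have kneg: "k s < 0" if "\<bar>s\<bar> < d" for s
      using d(2)[of s] k0 that by (cases "s = 0") auto
    define t where "t = min (d/2) (min (r/(2*norm v)) (\<rho>/(2*norm v)))"
    have t0: "t > 0" using d r rho nv by (simp add: t_def)
    have td: "t < d" using d by (simp add: t_def)
    have tr: "t * norm v < r"
    proof -
      have "t \<le> r/(2*norm v)" by (simp add: t_def)
      then have "t * norm v \<le> r/2" using nv by (simp add: field_simps)
      then show ?thesis using r by simp
    qed
    have trho: "t * norm v < \<rho>"
    proof -
      have "t \<le> \<rho>/(2*norm v)" by (simp add: t_def)
      then have "t * norm v \<le> \<rho>/2" using nv by (simp add: field_simps)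
      then show ?thesis using rho by simp
    qed
    have inS: "x + s *\<^sub>R v \<in> S" if "\<bar>s\<bar> \<le> t" for s
    proof -
      have "norm (s *\<^sub>R v) \<le> t * norm v" using that by (simp add: mult_right_mono)
      then have "dist x (x + s *\<^sub>R v) < r" using tr by (simp add: dist_norm)
      then show ?thesis using r(2) by auto
    qed
    obtain a where a: "0 < a" "a < t" "phi (x + t *\<^sub>R v) - phi x = t * (Dphi (x + a *\<^sub>R v) \<bullet> v)"
      using mvt_line1[OF c2 t0, of x v] inS by auto
    have seg2: "(x - t *\<^sub>R v) + s *\<^sub>R v \<in> S" if "0 \<le> s" "s \<le> t" for s
    proof -
      have "(x - t *\<^sub>R v) + s *\<^sub>R v = x + (s - t) *\<^sub>R v" by (simp add: algebra_simps)
      moreover have "\<bar>s - t\<bar> \<le> t" using that by simp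
      ultimately show ?thesis using inS by metis
    qed
    obtain b' where b': "0 < b'" "b' < t" "phi ((x - t *\<^sub>R v) + t *\<^sub>R v) - phi (x - t *\<^sub>R v) = t * (Dphi ((x - t *\<^sub>R v) + b' *\<^sub>R v) \<bullet> v)"
      using mvt_line1[OF c2 t0, of "x - t *\<^sub>R v" v] seg2 by blast
    define b where "b = b' - t"
    have bb: "-t < b" "b < 0" using b' by (auto simp: b_def)
    have eb: "(x - t *\<^sub>R v) + b' *\<^sub>R v = x + b *\<^sub>R v" by (simp add: b_def algebra_simps)
    have ab: "0 < a - b" using a bb by simp
    have seg3: "(x + b *\<^sub>R v) + s *\<^sub>R v \<in> S" if "0 \<le> s" "s \<le> a - b" for s
    proof -
      have "(x + b *\<^sub>R v) + s *\<^sub>R v = x + (b + s) *\<^sub>R v" by (simp add: algebra_simps)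
      moreover have "\<bar>b + s\<bar> \<le> t" using that a bb by simp
      ultimately show ?thesis using inS by metis
    qed
    obtain z where z: "0 < z" "z < a - b" "Dphi ((x + b *\<^sub>R v) + (a - b) *\<^sub>R v) \<bullet> v - Dphi (x + b *\<^sub>R v) \<bullet> v = (a - b) * ((Hphi ((x + b *\<^sub>R v) + z *\<^sub>R v) *v v) \<bullet> v)"
      using mvt_line2[OF c2 ab, of "x + b *\<^sub>R v" v v] seg3 by blast
    have e1: "(x + b *\<^sub>R v) + (a - b) *\<^sub>R v = x + a *\<^sub>R v" by (simp add: algebra_simps)
    have e2: "(x + b *\<^sub>R v) + z *\<^sub>R v = x + (b + z) *\<^sub>R v" by (simp add: algebra_simps)
    have kz: "k (b + z) < 0" using kneg z a bb td by simp
    have "phi (x + t *\<^sub>R v) + phi (x - t *\<^sub>R v) - 2 * phi x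
          = t * (Dphi (x + a *\<^sub>R v) \<bullet> v - Dphi (x + b *\<^sub>R v) \<bullet> v)"
      using a(3) b'(3) eb by (simp add: algebra_simps)
    also have "\<dots> = t * ((a - b) * k (b + z))" using z(3) e1 e2 by (simp add: k_def)
    finally have neg2: "phi (x + t *\<^sub>R v) + phi (x - t *\<^sub>R v) - 2 * phi x < 0"
      using t0 ab kz by (simp add: mult_pos_neg)
    have "norm (t *\<^sub>R v) < \<rho>" using trho t0 by simp
    then show False using sd neg2 by fastforce
  qed
qed



lemma rep_delta:
  assumes c2: "C2_on S phi Dphi Hphi" and t0: "0 < t"
    and box: "\<And>\<alpha> \<beta>. 0 \<le> \<alpha> \<Longrightarrow> \<alpha> \<le> t \<Longrightarrow> 0 \<le> \<beta> \<Longrightarrow> \<beta> \<le> t \<Longrightarrow> x + \<alpha> *\<^sub>R v + \<beta> *\<^sub>R w \<in> S"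
  shows "\<exists>a b. 0 < a \<and> a < t \<and> 0 < b \<and> b < t \<and>
     phi (x + t *\<^sub>R v + t *\<^sub>R w) - phi (x + t *\<^sub>R v) - phi (x + t *\<^sub>R w) + phi x
       = t * t * ((Hphi (x + a *\<^sub>R v + b *\<^sub>R w) *v w) \<bullet> v)"
proof -
  have der: "((\<lambda>s. phi ((x + t *\<^sub>R w) + s *\<^sub>R v) - phi (x + s *\<^sub>R v)) has_real_derivative
       (Dphi ((x + t *\<^sub>R w) + s *\<^sub>R v) \<bullet> v - Dphi (x + s *\<^sub>R v) \<bullet> v)) (at s)"
    if "0 \<le> s" "s \<le> t" for s
  proof -
    have m1: "(x + t *\<^sub>R w) + s *\<^sub>R v \<in> S"
      using box[of s t] that t0 by (simp add: algebra_simps)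
    have m2: "x + s *\<^sub>R v \<in> S"
      using box[of s 0] that t0 by simp
    show ?thesis using DERIV_diff[OF line_deriv1[OF c2 m1] line_deriv1[OF c2 m2]] .
  qed
  obtain a where a: "0 < a" "a < t"
    "(phi ((x + t *\<^sub>R w) + t *\<^sub>R v) - phi (x + t *\<^sub>R v)) - (phi ((x + t *\<^sub>R w) + 0 *\<^sub>R v) - phi (x + 0 *\<^sub>R v))
      = (t - 0) * (Dphi ((x + t *\<^sub>R w) + a *\<^sub>R v) \<bullet> v - Dphi (x + a *\<^sub>R v) \<bullet> v)"
    using MVT2[OF t0 der] by blast
  have seg: "(x + a *\<^sub>R v) + s *\<^sub>R w \<in> S" if "0 \<le> s" "s \<le> t" for s
    using box[of a s] that a by simp
  obtain b where b: "0 < b" "b < t"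
    "Dphi ((x + a *\<^sub>R v) + t *\<^sub>R w) \<bullet> v - Dphi (x + a *\<^sub>R v) \<bullet> v = t * ((Hphi ((x + a *\<^sub>R v) + b *\<^sub>R w) *v w) \<bullet> v)"
    using mvt_line2[OF c2 t0, of "x + a *\<^sub>R v" w v] seg by blast
  have e1: "(x + t *\<^sub>R w) + a *\<^sub>R v = (x + a *\<^sub>R v) + t *\<^sub>R w" by (simp add: algebra_simps)
  have e2: "(x + t *\<^sub>R w) + t *\<^sub>R v = x + t *\<^sub>R v + t *\<^sub>R w" by (simp add: algebra_simps)
  have "phi (x + t *\<^sub>R v + t *\<^sub>R w) - phi (x + t *\<^sub>R v) - phi (x + t *\<^sub>R w) + phi x
       = t * (t * ((Hphi ((x + a *\<^sub>R v) + b *\<^sub>R w) *v w) \<bullet> v))"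
    using a(3) b(3) e1 e2 by simp
  then show ?thesis using a b by (auto simp: mult.assoc)
qed

lemma hess_sym:
  assumes c2: "C2_on S phi Dphi Hphi" and x: "x \<in> S"
  shows "(Hphi x *v v) \<bullet> w = v \<bullet> (Hphi x *v w)"
proof (rule ccontr)
  define P where "P = (\<lambda>q. (Hphi q *v w) \<bullet> v)"
  define Q where "Q = (\<lambda>q. (Hphi q *v v) \<bullet> w)"
  assume "(Hphi x *v v) \<bullet> w \<noteq> v \<bullet> (Hphi x *v w)"
  then have ne: "P x \<noteq> Q x" by (simp add: P_def Q_def inner_commute)
  define e where "e = \<bar>P x - Q x\<bar>"
  have e0: "e > 0" using ne by (simp add: e_def)
  have cP: "isCont P x" unfolding P_def
    using continuous_at_compose[of x Hphi "\<lambda>A. (A *v w) \<bullet> v"] isCont_H[OF c2 x] Q_cont[where v=w and w=v and M="Hphi x"]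
    by (simp add: o_def)
  have cQ: "isCont Q x" unfolding Q_def
    using continuous_at_compose[of x Hphi "\<lambda>A. (A *v v) \<bullet> w"] isCont_H[OF c2 x] Q_cont[where v=v and w=w and M="Hphi x"]
    by (simp add: o_def)
  obtain d1 where d1: "d1 > 0" "\<And>q. dist q x < d1 \<Longrightarrow> dist (P q) (P x) < e/2"
    using cP e0 unfolding continuous_at_eps_delta by (meson half_gt_zero)
  obtain d2 where d2: "d2 > 0" "\<And>q. dist q x < d2 \<Longrightarrow> dist (Q q) (Q x) < e/2"
    using cQ e0 unfolding continuous_at_eps_delta by (meson half_gt_zero)
  obtain r where r: "r > 0" "ball x r \<subseteq> S" using C2_open[OF c2] x openE by blast
  define D where "D = min r (min d1 d2)"
  have D0: "D > 0" using r d1 d2 by (simp add: D_def)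
  define t where "t = D / (2 * (norm v + norm w + 1))"
  have pos: "2 * (norm v + norm w + 1) > 0" by (smt (verit) norm_ge_zero)
  have t0: "t > 0" unfolding t_def using D0 pos by (rule divide_pos_pos)
  have tD: "t * (norm v + norm w) < D"
  proof -
    have K: "norm v + norm w + 1 \<noteq> 0" by (smt (verit) norm_ge_zero)
    have "t * (norm v + norm w + 1) = D / 2" unfolding t_def
      using K by (simp add: field_simps del: distrib_left_numeral)
    then show ?thesis using t0 D0 by (simp add: algebra_simps)
  qed
  have near: "dist (x + \<alpha> *\<^sub>R a + \<beta> *\<^sub>R c) x < D"
    if "0 \<le> \<alpha>" "\<alpha> \<le> t" "0 \<le> \<beta>" "\<beta> \<le> t" "norm a + norm c = norm v + norm w" for \<alpha> \<beta> a c
  proof -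
    have "dist (x + \<alpha> *\<^sub>R a + \<beta> *\<^sub>R c) x = norm (\<alpha> *\<^sub>R a + \<beta> *\<^sub>R c)" by (simp add: dist_norm)
    also have "\<dots> \<le> \<alpha> * norm a + \<beta> * norm c" using that
      by (metis (no_types, lifting) abs_of_nonneg norm_scaleR norm_triangle_ineq)
    also have "\<dots> \<le> t * norm a + t * norm c" using that by (intro add_mono mult_right_mono) auto
    also have "\<dots> = t * (norm v + norm w)" using that(5) by (metis distrib_left)
    finally show ?thesis using tD by simp
  qed
  have box: "x + \<alpha> *\<^sub>R a + \<beta> *\<^sub>R c \<in> S"
    if "0 \<le> \<alpha>" "\<alpha> \<le> t" "0 \<le> \<beta>" "\<beta> \<le> t" "norm a + norm c = norm v + norm w" for \<alpha> \<beta> a c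
  proof -
    have "dist x (x + \<alpha> *\<^sub>R a + \<beta> *\<^sub>R c) < r" using near[OF that] by (simp add: D_def dist_commute)
    then show ?thesis using r(2) by auto
  qed
  obtain a1 b1 where ab1: "0 < a1" "a1 < t" "0 < b1" "b1 < t"
     "phi (x + t *\<^sub>R v + t *\<^sub>R w) - phi (x + t *\<^sub>R v) - phi (x + t *\<^sub>R w) + phi x
       = t * t * P (x + a1 *\<^sub>R v + b1 *\<^sub>R w)"
    using rep_delta[OF c2 t0, of x v w] box[of _ _ v w] unfolding P_def by blast
  obtain a2 b2 where ab2: "0 < a2" "a2 < t" "0 < b2" "b2 < t"
     "phi (x + t *\<^sub>R w + t *\<^sub>R v) - phi (x + t *\<^sub>R w) - phi (x + t *\<^sub>R v) + phi x
       = t * t * Q (x + a2 *\<^sub>R w + b2 *\<^sub>R v)"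
    using rep_delta[OF c2 t0, of x w v] box[of _ _ w v] unfolding Q_def by (simp add: add.commute) blast
  have "x + t *\<^sub>R w + t *\<^sub>R v = x + t *\<^sub>R v + t *\<^sub>R w" by (simp add: algebra_simps)
  then have "phi (x + t *\<^sub>R w + t *\<^sub>R v) = phi (x + t *\<^sub>R v + t *\<^sub>R w)" by metis
  then have "t * t * P (x + a1 *\<^sub>R v + b1 *\<^sub>R w) = t * t * Q (x + a2 *\<^sub>R w + b2 *\<^sub>R v)"
    using ab1(5) ab2(5) by linarith
  then have eqPQ: "P (x + a1 *\<^sub>R v + b1 *\<^sub>R w) = Q (x + a2 *\<^sub>R w + b2 *\<^sub>R v)" using t0 by simp
  have "dist (x + a1 *\<^sub>R v + b1 *\<^sub>R w) x < d1"
    using near[of a1 b1 v w] ab1 by (simp add: D_def)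
  then have 1: "dist (P (x + a1 *\<^sub>R v + b1 *\<^sub>R w)) (P x) < e/2" using d1 by blast
  have "dist (x + a2 *\<^sub>R w + b2 *\<^sub>R v) x < d2"
    using near[of a2 b2 w v] ab2 by (simp add: D_def add.commute)
  then have 2: "dist (Q (x + a2 *\<^sub>R w + b2 *\<^sub>R v)) (Q x) < e/2" using d2 by blast
  from 1 2 eqPQ have "\<bar>P x - Q x\<bar> < e" unfolding dist_real_def by linarith
  then show False by (simp add: e_def)
qed



lemma hN_pos: "N > 0 \<Longrightarrow> hN N > 0" by (simp add: hN_def)

lemma finite_grid_bounded:
  assumes b: "bounded B" and N: "N > 0"
  shows "finite (B \<inter> (grid N :: (real^'n) set))"
proof -
  obtain b where b0: "b > 0" and bb: "\<forall>x\<in>B. norm x \<le> b" using b bounded_pos by blast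
  define K where "K = \<lceil>b * real N\<rceil>"
  define g where "g = (\<lambda>k::'n \<Rightarrow> int. (\<chi> i. real_of_int (k i) * hN N) :: real^'n)"
  have "B \<inter> grid N \<subseteq> g ` (PiE UNIV (\<lambda>_. {-K..K}))"
  proof
    fix y :: "real^'n" assume y: "y \<in> B \<inter> grid N"
    define k where "k = (\<lambda>i. \<lfloor>y$i * real N\<rfloor>)"
    have yk: "y$i = real_of_int (k i) * hN N" for i
    proof -
      obtain m where m: "y$i = real_of_int m * hN N" using y unfolding grid_def by blast
      then have "y$i * real N = real_of_int m" using N by (simp add: hN_def)
      then have "k i = m" by (simp add: k_def)
      then show ?thesis using m by simp
    qed
    have "y = g k" unfolding g_def by (simp add: vec_eq_iff yk)
    moreover have "k \<in> PiE UNIV (\<lambda>_. {-K..K})"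
    proof -
      have "k i \<in> {-K..K}" for i
      proof -
        have "\<bar>y$i\<bar> \<le> b" using bb y component_le_norm_cart[of y i] by force
        then have "\<bar>y$i * real N\<bar> \<le> b * real N" using N by (simp add: abs_mult mult_right_mono)
        then have "- (b * real N) \<le> y$i * real N" "y$i * real N \<le> b * real N" by linarith+
        then have "\<lfloor>- (b * real N)\<rfloor> \<le> k i" "k i \<le> \<lfloor>b * real N\<rfloor>" unfolding k_def
          by (auto intro: floor_mono)
        moreover have "\<lfloor>- (b * real N)\<rfloor> = - K" unfolding K_def by (simp add: floor_minus)
        moreover have "\<lfloor>b * real N\<rfloor> \<le> K" unfolding K_def by (rule floor_le_ceiling)
        ultimately show ?thesis by simp
      qed
      then show ?thesis by auto
    qed
    ultimately show "y \<in> g ` (PiE UNIV (\<lambda>_. {-K..K}))" by blast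
  qed
  moreover have "finite (PiE (UNIV::'n set) (\<lambda>_. {-K..K}))" by (intro finite_PiE) auto
  ultimately show ?thesis using finite_subset by blast
qed

lemma dplus_bound:
  fixes v :: "real^'n \<Rightarrow> real"
  assumes N: "N > 0" and b: "bounded Or"
    and nb: "norm1h N Or v \<le> Cs * hN N powr (2 + real CARD('n) / 2)"
    and z: "z \<in> Omr0h N Or"
  shows "\<bar>dplus N i v z\<bar> \<le> \<bar>Cs\<bar> * hN N ^ 2"
proof -
  define h where "h = hN N"
  have h0: "h > 0" using hN_pos[OF N] by (simp add: h_def)
  have fin: "finite (Omr0h N Or)"
  proof -
    have "Omr0h N Or \<subseteq> closure Or \<inter> grid N" unfolding Omr0h_def Omrh_def by auto
    moreover have "finite (closure Or \<inter> (grid N :: (real^'n) set))"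
      using finite_grid_bounded[OF bounded_closure[OF b] N] .
    ultimately show ?thesis using finite_subset by blast
  qed
  define T where "T = (\<Sum>i\<in>UNIV. \<Sum>x\<in>Omr0h N Or. (dplus N i v x)\<^sup>2)"
  have "(dplus N i v z)\<^sup>2 \<le> (\<Sum>x\<in>Omr0h N Or. (dplus N i v x)\<^sup>2)"
    using member_le_sum[OF z, of "\<lambda>x. (dplus N i v x)\<^sup>2"] fin by simp
  also have "\<dots> \<le> T" unfolding T_def
    by (rule member_le_sum[of i UNIV "\<lambda>i. \<Sum>x\<in>Omr0h N Or. (dplus N i v x)\<^sup>2"]) (auto intro: sum_nonneg)
  finally have dT: "(dplus N i v z)\<^sup>2 \<le> T" .
  have T0: "T \<ge> 0" unfolding T_def by (intro sum_nonneg) auto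
  define a where "a = 2 + real CARD('n) / 2"
  have sq: "sqrt (h ^ CARD('n) * T) \<le> Cs * h powr a"
    using nb unfolding norm1h_def T_def h_def a_def .
  have X0: "h ^ CARD('n) * T \<ge> 0" using h0 T0 by simp
  have c0: "Cs * h powr a \<ge> 0" using sq real_sqrt_ge_zero[OF X0] by linarith
  have "h ^ CARD('n) * T = (sqrt (h ^ CARD('n) * T))\<^sup>2" using X0 by simp
  also have "\<dots> \<le> (Cs * h powr a)\<^sup>2" using sq real_sqrt_ge_zero[OF X0] by (intro power_mono) auto
  also have "\<dots> = Cs\<^sup>2 * (h powr a * h powr a)" by (simp add: power2_eq_square algebra_simps)
  also have "h powr a * h powr a = h powr (a + a)" by (rule powr_add[symmetric])
  also have "a + a = real (4 + CARD('n))" by (simp add: a_def)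
  also have "h powr real (4 + CARD('n)) = h ^ (4 + CARD('n))" using powr_realpow[OF h0, of "4 + CARD('n)"] by simp
  finally have "h ^ CARD('n) * T \<le> Cs\<^sup>2 * h ^ (4 + CARD('n))" .
  then have "h ^ CARD('n) * T \<le> h ^ CARD('n) * (Cs\<^sup>2 * h ^ 4)" by (simp add: power_add algebra_simps)
  then have "T \<le> Cs\<^sup>2 * h ^ 4" using h0 by simp
  then have "(dplus N i v z)\<^sup>2 \<le> (\<bar>Cs\<bar> * h\<^sup>2)\<^sup>2" using dT by (simp add: power_mult_distrib power2_eq_square[of "h^2"] flip: power_add)
  then have "\<bar>dplus N i v z\<bar> \<le> \<bar>\<bar>Cs\<bar> * h\<^sup>2\<bar>" using abs_le_square_iff by blast
  then show ?thesis by (simp add: h_def)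
qed

lemma walk_bound:
  fixes v :: "real^'n \<Rightarrow> real"
  assumes N: "N > 0"
    and bd: "\<forall>y\<in>Omrh N Or - Omr0h N Or. v y = 0"
    and dp: "\<forall>z\<in>Omr0h N Or. \<bar>dplus N i v z\<bar> \<le> c"
    and R: "\<forall>y\<in>closure Or. norm y \<le> R" and c0: "c \<ge> 0"
  shows "\<forall>y\<in>Omrh N Or. y$i + real k * hN N > R \<longrightarrow> \<bar>v y\<bar> \<le> real k * (c * hN N)"
proof (induction k)
  case 0
  show ?case
  proof (intro ballI impI)
    fix y assume y: "y \<in> Omrh N Or" and g: "y$i + real 0 * hN N > R"
    have "y$i \<le> norm y" using component_le_norm_cart[of y i] by linarith
    also have "norm y \<le> R" using R y unfolding Omrh_def by blast
    finally show "\<bar>v y\<bar> \<le> real 0 * (c * hN N)" using g by simp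
  qed
next
  case (Suc k)
  show ?case
  proof (intro ballI impI)
    fix y assume y: "y \<in> Omrh N Or" and g: "y$i + real (Suc k) * hN N > R"
    have h0: "hN N > 0" using hN_pos[OF N] .
    show "\<bar>v y\<bar> \<le> real (Suc k) * (c * hN N)"
    proof (cases "y \<in> Omr0h N Or")
      case False
      then have "v y = 0" using bd y by blast
      then show ?thesis using h0 c0 by simp
    next
      case True
      define y' where "y' = y + hN N *\<^sub>R axis i 1"
      have y': "y' \<in> Omrh N Or" using True unfolding Omr0h_def y'_def by blast
      have "y'$i = y$i + hN N" by (simp add: y'_def axis_def)
      then have "y'$i + real k * hN N > R" using g by (simp add: algebra_simps)
      then have IH: "\<bar>v y'\<bar> \<le> real k * (c * hN N)" using Suc.IH y' by blast
      have "\<bar>(v y' - v y) / hN N\<bar> \<le> c" using dp True unfolding dplus_def y'_def by blast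
      then have "\<bar>v y' - v y\<bar> \<le> c * hN N" using h0 by (simp add: abs_div divide_le_eq)
      then show ?thesis using IH by (simp add: algebra_simps)
    qed
  qed
qed

lemma disc_bound:
  fixes U :: "nat \<Rightarrow> real^'n \<Rightarrow> real" and u :: "real^'n \<Rightarrow> real"
  assumes b: "bounded Or" and N0: "N0 \<ge> 1"
    and hyp: "\<forall>N\<ge>N0. (\<forall>x\<in>Omrh N Or - Omr0h N Or. U N x = u x) \<and>
         norm1h N Or (\<lambda>y. U N y - u y) \<le> Cs * hN N powr (2 + real CARD('n) / 2)"
  shows "\<exists>M\<ge>0. \<forall>N\<ge>N0. \<forall>y\<in>Omrh N Or. \<bar>U N y - u y\<bar> \<le> M * hN N"
proof -
  obtain R where R0: "R > 0" and R: "\<forall>y\<in>closure Or. norm y \<le> R"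
    using bounded_closure[OF b] bounded_pos by blast
  define i :: 'n where "i = undefined"
  define M where "M = \<bar>Cs\<bar> * (2 * R + 2)"
  have M0: "M \<ge> 0" using R0 by (simp add: M_def)
  have "\<forall>N\<ge>N0. \<forall>y\<in>Omrh N Or. \<bar>U N y - u y\<bar> \<le> M * hN N"
  proof (intro allI impI ballI)
    fix N y assume NN: "N \<ge> N0" and y: "y \<in> Omrh N Or"
    have N: "N > 0" using NN N0 by simp
    define h where "h = hN N"
    have h0: "h > 0" using hN_pos[OF N] by (simp add: h_def)
    have h1: "h \<le> 1" using N by (simp add: h_def hN_def)
    define v where "v = (\<lambda>y. U N y - u y)"
    define c where "c = \<bar>Cs\<bar> * h ^ 2"
    have c0: "c \<ge> 0" by (simp add: c_def)
    have dp: "\<forall>z\<in>Omr0h N Or. \<bar>dplus N i v z\<bar> \<le> c"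
      using dplus_bound[OF N b] hyp NN unfolding c_def h_def v_def by blast
    have bd: "\<forall>y\<in>Omrh N Or - Omr0h N Or. v y = 0" using hyp NN unfolding v_def by simp
    define k where "k = nat \<lceil>2 * R / h\<rceil> + 1"
    have kge: "real k \<ge> 2 * R / h + 1" unfolding k_def using real_nat_ceiling_ge[of "2 * R / h"] by simp
    have kle: "real k \<le> 2 * R / h + 2"
    proof -
      have "real (nat \<lceil>2 * R / h\<rceil>) \<le> 2 * R / h + 1"
      proof -
        have "2 * R / h \<ge> 0" using R0 h0 by simp
        then have "real (nat \<lceil>2 * R / h\<rceil>) = of_int \<lceil>2 * R / h\<rceil>" by simp
        then show ?thesis using of_int_ceiling_le_add_one[of "2 * R / h"] by linarith
      qed
      then show ?thesis unfolding k_def by simp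
    qed
    have kh1: "real k * h \<ge> 2 * R + h" using kge h0 by (simp add: field_simps)
    have kh2: "real k * h \<le> 2 * R + 2 * h" using kle h0 by (simp add: field_simps)
    have "- R \<le> y$i"
    proof -
      have "norm y \<le> R" using R y unfolding Omrh_def by blast
      then show ?thesis using component_le_norm_cart[of y i] by linarith
    qed
    then have "y$i + real k * hN N > R" using kh1 h0 unfolding h_def by linarith
    then have "\<bar>v y\<bar> \<le> real k * (c * hN N)"
      using walk_bound[OF N bd dp R c0, of k] y by blast
    also have "\<dots> = \<bar>Cs\<bar> * h^2 * (real k * h)" by (simp add: c_def h_def algebra_simps)
    also have "\<dots> \<le> \<bar>Cs\<bar> * h^2 * (2 * R + 2)"
      using kh2 h1 by (intro mult_left_mono) auto
    also have "\<dots> \<le> \<bar>Cs\<bar> * h * (2 * R + 2)"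
    proof -
      have "h^2 \<le> h" using h0 h1 by (simp add: power2_eq_square mult_le_cancel_right1)
      then show ?thesis using R0 by (intro mult_right_mono mult_left_mono) auto
    qed
    finally show "\<bar>U N y - u y\<bar> \<le> M * hN N" by (simp add: v_def M_def h_def algebra_simps)
  qed
  then show ?thesis using M0 by blast
qed



lemma grid_near:
  fixes x :: "real^'n"
  assumes N: "N > 0"
  shows "(\<chi> i. real_of_int \<lfloor>x$i * real N\<rfloor> * hN N) \<in> grid N"
    and "dist (\<chi> i. real_of_int \<lfloor>x$i * real N\<rfloor> * hN N) x \<le> real CARD('n) / real N"
proof -
  show "(\<chi> i. real_of_int \<lfloor>x$i * real N\<rfloor> * hN N) \<in> grid N" unfolding grid_def by auto
  define y where "y = (\<chi> i. real_of_int \<lfloor>x$i * real N\<rfloor> * hN N)"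
  have c: "\<bar>(y - x)$i\<bar> \<le> 1 / real N" for i
  proof -
    have a: "real_of_int \<lfloor>x$i * real N\<rfloor> \<le> x$i * real N" by simp
    have b: "x$i * real N - 1 < real_of_int \<lfloor>x$i * real N\<rfloor>" by linarith
    have "y$i = real_of_int \<lfloor>x$i * real N\<rfloor> / real N" by (simp add: y_def hN_def)
    then show ?thesis using a b N by (simp add: field_simps abs_le_iff) linarith
  qed
  have "dist y x = norm (y - x)" by (simp add: dist_norm)
  also have "\<dots> \<le> (\<Sum>i\<in>UNIV. \<bar>(y - x)$i\<bar>)" by (rule norm_le_l1_cart)
  also have "\<dots> \<le> (\<Sum>i\<in>(UNIV::'n set). 1 / real N)" by (intro sum_mono c)
  also have "\<dots> = real CARD('n) / real N" by simp
  finally show "dist (\<chi> i. real_of_int \<lfloor>x$i * real N\<rfloor> * hN N) x \<le> real CARD('n) / real N"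
    by (simp add: y_def)
qed

lemma ereal_le_by_eps: "(\<And>e. e > 0 \<Longrightarrow> X \<le> ereal (a + e)) \<Longrightarrow> X \<le> ereal a"
  by (rule ereal_le_epsilon2) simp

lemma ereal_ge_by_eps: "(\<And>e. e > 0 \<Longrightarrow> ereal (a - e) \<le> X) \<Longrightarrow> ereal a \<le> X"
proof (rule ereal_le_epsilon2)
  fix e :: real assume "(\<And>e. e > 0 \<Longrightarrow> ereal (a - e) \<le> X)" "e > 0"
  then have "ereal (a - e) \<le> X" by blast
  then have "ereal (a - e) + ereal e \<le> X + ereal e" by (rule add_right_mono)
  then show "ereal a \<le> X + ereal e" by simp
qed

lemma hrl_eq:
  fixes U :: "nat \<Rightarrow> real^'n \<Rightarrow> real" and u :: "real^'n \<Rightarrow> real"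
  assumes x: "x \<in> Or" and Or_open: "open Or" and Or_sub: "Or \<subseteq> Omega"
    and u_cont: "continuous_on (closure Omega) u" and N0: "N0 \<ge> 1"
    and bound: "\<forall>N\<ge>N0. \<forall>y\<in>Omrh N Or. \<bar>U N y - u y\<bar> \<le> M * hN N" and M0: "M \<ge> 0"
  shows "hrl_upper N0 U x = ereal (u x) \<and> hrl_lower N0 U x = ereal (u x)"
proof -
  define A where "A d = {(N, y). N \<ge> N0 \<and> 0 < N \<and> hN N \<le> d \<and> y \<in> Omh0 N \<and> dist y x \<le> d}" for d
  have up: "hrl_upper N0 U x = (INF d\<in>{0<..}. SUP p\<in>A d. ereal (U (fst p) (snd p)))"
    unfolding hrl_upper_def A_def by simp
  have lo: "hrl_lower N0 U x = (SUP d\<in>{0<..}. INF p\<in>A d. ereal (U (fst p) (snd p)))"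
    unfolding hrl_lower_def A_def by simp
  obtain r where r: "r > 0" "ball x r \<subseteq> Or" using Or_open x openE by blast
  have mono: "A d \<subseteq> A d'" if "d \<le> d'" for d d' using that unfolding A_def by auto
  have ne: "A d \<noteq> {}" if d: "d > 0" for d
  proof -
    define m where "m = min d r"
    have m0: "m > 0" using d r by (simp add: m_def)
    define N where "N = max N0 (nat \<lceil>real CARD('n) / m\<rceil> + 1)"
    have NN0: "N \<ge> N0" by (simp add: N_def)
    have N0': "N > 0" using N0 NN0 by simp
    have "real N \<ge> real (nat \<lceil>real CARD('n) / m\<rceil>) + 1" unfolding N_def by simp
    moreover have "real (nat \<lceil>real CARD('n) / m\<rceil>) \<ge> real CARD('n) / m" by (rule real_nat_ceiling_ge)
    ultimately have "real N > real CARD('n) / m" by linarith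
    then have nm: "real CARD('n) / real N < m" using m0 N0' by (simp add: field_simps)
    have "1 / real N \<le> real CARD('n) / real N" using N0' by (simp add: divide_right_mono)
    then have hN: "hN N \<le> d" using nm by (simp add: hN_def m_def)
    define y where "y = (\<chi> i. real_of_int \<lfloor>x$i * real N\<rfloor> * hN N)"
    have yg: "y \<in> grid N" using grid_near(1)[OF N0'] by (simp add: y_def)
    have yd: "dist y x < m" using grid_near(2)[OF N0', of x] nm by (simp add: y_def)
    then have "y \<in> Or" using r m_def by (auto simp: dist_commute)
    then have "y \<in> Omh0 N" using yg Or_sub unfolding Omh0_def by auto
    then have "(N, y) \<in> A d" using NN0 N0' hN yd unfolding A_def m_def by auto
    then show ?thesis by blast
  qed
  have close: "\<exists>d0>0. \<forall>p\<in>A d0. \<bar>U (fst p) (snd p) - u x\<bar> < e" if e: "e > 0" for e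
  proof -
    have xc: "x \<in> closure Omega" using x Or_sub closure_subset by blast
    obtain \<delta> where \<delta>: "\<delta> > 0" "\<forall>y\<in>closure Omega. dist y x < \<delta> \<longrightarrow> dist (u y) (u x) < e/2"
      using u_cont xc e unfolding continuous_on_iff by (meson half_gt_zero)
    define d0 where "d0 = min (r/2) (min (\<delta>/2) (e / (2 * (M + 1))))"
    have d00: "d0 > 0" using r \<delta> e M0 by (simp add: d0_def)
    have "\<bar>U N y - u x\<bar> < e" if p: "(N, y) \<in> A d0" for N y
    proof -
      have NN: "N \<ge> N0" "hN N \<le> d0" "y \<in> Omh0 N" "dist y x \<le> d0" using p unfolding A_def by auto
      have "dist y x < r" using NN(4) r by (simp add: d0_def)
      then have yO: "y \<in> Or" using r by (auto simp: dist_commute)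
      then have "y \<in> Omrh N Or" using NN(3) closure_subset unfolding Omrh_def Omh0_def by blast
      then have b1: "\<bar>U N y - u y\<bar> \<le> M * hN N" using bound NN(1) by blast
      have "M * hN N \<le> M * (e / (2 * (M + 1)))"
        using NN(2) M0 by (intro mult_left_mono) (auto simp: d0_def)
      also have "\<dots> < e / 2" using M0 e by (simp add: field_simps)
      finally have b1': "\<bar>U N y - u y\<bar> < e/2" using b1 by linarith
      have "y \<in> closure Omega" using yO Or_sub closure_subset by blast
      moreover have "dist y x < \<delta>" using NN(4) \<delta> by (simp add: d0_def)
      ultimately have "dist (u y) (u x) < e/2" using \<delta> by blast
      then show ?thesis using b1' unfolding dist_real_def by linarith
    qed
    then show ?thesis using d00 by auto
  qed
  have U1: "hrl_upper N0 U x \<le> ereal (u x)"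
  proof (rule ereal_le_by_eps)
    fix e :: real assume e: "e > 0"
    obtain d0 where d0: "d0 > 0" "\<forall>p\<in>A d0. \<bar>U (fst p) (snd p) - u x\<bar> < e" using close[OF e] by blast
    have "hrl_upper N0 U x \<le> (SUP p\<in>A d0. ereal (U (fst p) (snd p)))"
      unfolding up using d0(1) by (intro INF_lower) simp
    also have "\<dots> \<le> ereal (u x + e)"
      using d0(2) by (intro SUP_least) (auto simp: abs_less_iff)
    finally show "hrl_upper N0 U x \<le> ereal (u x + e)" .
  qed
  have U2: "ereal (u x) \<le> hrl_upper N0 U x"
    unfolding up
  proof (rule INF_greatest)
    fix d :: real assume "d \<in> {0<..}"
    then have d: "d > 0" by simp
    show "ereal (u x) \<le> (SUP p\<in>A d. ereal (U (fst p) (snd p)))"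
    proof (rule ereal_ge_by_eps)
      fix e :: real assume e: "e > 0"
      obtain d0 where d0: "d0 > 0" "\<forall>p\<in>A d0. \<bar>U (fst p) (snd p) - u x\<bar> < e" using close[OF e] by blast
      obtain p where p: "p \<in> A (min d d0)" using ne[of "min d d0"] d d0 by auto
      have pd: "p \<in> A d" using p mono[of "min d d0" d] by auto
      have "p \<in> A d0" using p mono[of "min d d0" d0] by auto
      then have "ereal (u x - e) \<le> ereal (U (fst p) (snd p))" using d0(2) by (auto simp: abs_less_iff)
      also have "\<dots> \<le> (SUP p\<in>A d. ereal (U (fst p) (snd p)))" using pd by (rule SUP_upper)
      finally show "ereal (u x - e) \<le> (SUP p\<in>A d. ereal (U (fst p) (snd p)))" .
    qed
  qed
  have L1: "ereal (u x) \<le> hrl_lower N0 U x"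
  proof (rule ereal_ge_by_eps)
    fix e :: real assume e: "e > 0"
    obtain d0 where d0: "d0 > 0" "\<forall>p\<in>A d0. \<bar>U (fst p) (snd p) - u x\<bar> < e" using close[OF e] by blast
    have "ereal (u x - e) \<le> (INF p\<in>A d0. ereal (U (fst p) (snd p)))"
      using d0(2) by (intro INF_greatest) (auto simp: abs_less_iff)
    also have "\<dots> \<le> hrl_lower N0 U x"
      unfolding lo using d0(1) by (intro SUP_upper) simp
    finally show "ereal (u x - e) \<le> hrl_lower N0 U x" .
  qed
  have L2: "hrl_lower N0 U x \<le> ereal (u x)"
    unfolding lo
  proof (rule SUP_least)
    fix d :: real assume "d \<in> {0<..}"
    then have d: "d > 0" by simp
    show "(INF p\<in>A d. ereal (U (fst p) (snd p))) \<le> ereal (u x)"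
    proof (rule ereal_le_by_eps)
      fix e :: real assume e: "e > 0"
      obtain d0 where d0: "d0 > 0" "\<forall>p\<in>A d0. \<bar>U (fst p) (snd p) - u x\<bar> < e" using close[OF e] by blast
      obtain p where p: "p \<in> A (min d d0)" using ne[of "min d d0"] d d0 by auto
      have pd: "p \<in> A d" using p mono[of "min d d0" d] by auto
      have "p \<in> A d0" using p mono[of "min d d0" d0] by auto
      then have 1: "ereal (U (fst p) (snd p)) \<le> ereal (u x + e)" using d0(2) by (auto simp: abs_less_iff)
      have "(INF p\<in>A d. ereal (U (fst p) (snd p))) \<le> ereal (U (fst p) (snd p))" using pd by (rule INF_lower)
      then show "(INF p\<in>A d. ereal (U (fst p) (snd p))) \<le> ereal (u x + e)" using 1 by (rule order_trans)
    qed
  qed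
  show ?thesis using U1 U2 L1 L2 by auto
qed



lemma C2_restrict: "C2_on S phi Dphi Hphi \<Longrightarrow> open T \<Longrightarrow> C2_on (S \<inter> T) phi Dphi Hphi"
  unfolding C2_on_def by (auto intro: continuous_on_subset)

lemma visc_transfer:
  fixes u w f :: "real^'n \<Rightarrow> real"
  assumes x: "x \<in> Or" and Or_open: "open Or" and Or_sub: "Or \<subseteq> Omega"
    and uv: "MA_visc_sol_at f u x" and conv: "convex_on (closure Omega) u"
    and wu: "\<forall>y\<in>Or. w y = u y"
  shows "MA_visc_sol_at f w x \<and> cvx_visc_sol_at w x"
proof -
  have sub: "MA_visc_sub_at f w x"
    unfolding MA_visc_sub_at_def
  proof (intro allI impI, elim conjE)
    fix S phi Dphi Hphi
    assume xS: "x \<in> S" and c2: "C2_on S phi Dphi Hphi" and mx: "\<forall>y\<in>S. w y - phi y \<le> w x - phi x"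
    have "x \<in> S \<inter> Or" using xS x by blast
    moreover have "C2_on (S \<inter> Or) phi Dphi Hphi" using C2_restrict[OF c2 Or_open] .
    moreover have "\<forall>y\<in>S \<inter> Or. u y - phi y \<le> u x - phi x" using mx wu x by auto
    ultimately show "f x \<le> det (Hphi x)" using uv unfolding MA_visc_sol_at_def MA_visc_sub_at_def by blast
  qed
  have super: "MA_visc_super_at f w x"
    unfolding MA_visc_super_at_def
  proof (intro allI impI, elim conjE)
    fix S phi Dphi Hphi
    assume xS: "x \<in> S" and c2: "C2_on S phi Dphi Hphi" and mx: "\<forall>y\<in>S. w x - phi x \<le> w y - phi y"
      and p: "psd (Hphi x)"
    have "x \<in> S \<inter> Or" using xS x by blast
    moreover have "C2_on (S \<inter> Or) phi Dphi Hphi" using C2_restrict[OF c2 Or_open] .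
    moreover have "\<forall>y\<in>S \<inter> Or. u x - phi x \<le> u y - phi y" using mx wu x by auto
    ultimately show "det (Hphi x) \<le> f x" using uv p unfolding MA_visc_sol_at_def MA_visc_super_at_def by blast
  qed
  have cvx: "cvx_visc_sol_at w x"
    unfolding cvx_visc_sol_at_def
  proof (intro conjI allI impI; elim conjE)
    fix S phi Dphi Hphi
    assume xS: "x \<in> S" and c2: "C2_on S phi Dphi Hphi" and mx: "\<forall>y\<in>S. w y - phi y \<le> w x - phi x"
    define S' where "S' = S \<inter> Or"
    have xS': "x \<in> S'" using xS x by (simp add: S'_def)
    have c2': "C2_on S' phi Dphi Hphi" unfolding S'_def using C2_restrict[OF c2 Or_open] .
    obtain \<rho> where \<rho>: "\<rho> > 0" "ball x \<rho> \<subseteq> S'" using C2_open[OF c2'] xS' openE by blast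
    have sd: "\<forall>z::real^'n. norm z < \<rho> \<longrightarrow> 0 \<le> phi (x + z) + phi (x - z) - 2 * phi x"
    proof (intro allI impI)
      fix z :: "real^'n" assume z: "norm z < \<rho>"
      have p1: "x + z \<in> S'" using z \<rho> by (auto simp: dist_norm)
      have p2: "x - z \<in> S'" using z \<rho> by (auto simp: dist_norm)
      have m1: "u (x + z) - phi (x + z) \<le> u x - phi x" using mx wu x p1 by (auto simp: S'_def)
      have m2: "u (x - z) - phi (x - z) \<le> u x - phi x" using mx wu x p2 by (auto simp: S'_def)
      have c1: "x + z \<in> closure Omega" using p1 Or_sub closure_subset by (auto simp: S'_def)
      have c2: "x - z \<in> closure Omega" using p2 Or_sub closure_subset by (auto simp: S'_def)
      have "u ((1 - 1/2) *\<^sub>R (x + z) + (1/2) *\<^sub>R (x - z)) \<le> (1 - 1/2) * u (x + z) + (1/2) * u (x - z)"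
        using convex_onD[OF conv, of "1/2" "x + z" "x - z"] c1 c2 by simp
      moreover have "(1 - 1/2) *\<^sub>R (x + z) + (1/2::real) *\<^sub>R (x - z) = x"
      proof -
        have "(1 - 1/2) *\<^sub>R (x + z) + (1/2::real) *\<^sub>R (x - z) = (1/2 + 1/2::real) *\<^sub>R x"
          by (simp only: scaleR_add_right scaleR_diff_right scaleR_add_left) simp
        then show ?thesis by simp
      qed
      ultimately have "u x \<le> (1/2) * u (x + z) + (1/2) * u (x - z)" by simp
      then show "0 \<le> phi (x + z) + phi (x - z) - 2 * phi x" using m1 m2 by linarith
    qed
    have p: "psd (Hphi x)" using psd_from_sd[OF c2' xS' \<rho>(1) sd] .
    have "lambda1 (Hphi x) \<ge> 0" using lambda1_nonneg[OF hess_sym[OF c2 xS] p] .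
    then show "max (- lambda1 (Hphi x)) 0 \<le> 0" by simp
  next
    fix S phi Dphi Hphi
    show "max (- lambda1 (Hphi x)) 0 \<ge> 0" by simp
  qed
  show ?thesis using sub super cvx unfolding MA_visc_sol_at_def by blast
qed

theorem mainTheorem5:
  fixes f g gt u :: "real^'n \<Rightarrow> real"
    and U :: "nat \<Rightarrow> real^'n \<Rightarrow> real"
    and Or :: "(real^'n) set"
    and N0 :: nat and Cs :: real
  assumes n2: "CARD('n) \<ge> 2"
    and f_cont: "continuous_on (closure Omega) f"
    and f_pos: "\<forall>x\<in>closure Omega. f x > 0"
    and gt_cont: "continuous_on (closure Omega) gt"
    and gt_convex: "convex_on (closure Omega) gt"
    and gt_ext: "\<forall>x\<in>frontier Omega. gt x = g x"
    and u_cont: "continuous_on (closure Omega) u"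
    and u_convex: "convex_on (closure Omega) u"
    and u_visc: "\<forall>x\<in>Omega. MA_visc_sol_at f u x"
    and u_bd: "\<forall>x\<in>frontier Omega. u x = g x"
    and Or_open: "open Or" and Or_bounded: "bounded Or" and Or_convex: "convex Or"
    and Or_sub: "Or \<subseteq> Omega"
    and Or_reg: "\<forall>x\<in>Or. regular_point u x"
    and N0_pos: "N0 \<ge> 1"
    and U_sol: "\<forall>N\<ge>N0.
         (\<forall>x\<in>Omh0 N. Fh N Or f (U N) x = 0) \<and>
         (\<forall>x\<in>bdh N. U N x = g x) \<and>
         (\<forall>x\<in>Omrh N Or - Omr0h N Or. U N x = u x) \<and>
         norm1h N Or (\<lambda>y. U N y - u y) \<le> Cs * hN N powr (2 + real CARD('n) / 2)"
  shows "\<forall>x\<in>Or.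
           hrl_lower N0 U x = ereal (u x) \<and> hrl_upper N0 U x = ereal (u x) \<and>
           MA_visc_sol_at f (\<lambda>y. real_of_ereal (hrl_lower N0 U y)) x \<and>
           cvx_visc_sol_at (\<lambda>y. real_of_ereal (hrl_lower N0 U y)) x \<and>
           MA_visc_sol_at f (\<lambda>y. real_of_ereal (hrl_upper N0 U y)) x \<and>
           cvx_visc_sol_at (\<lambda>y. real_of_ereal (hrl_upper N0 U y)) x"
  proof (intro ballI)
  fix x assume x: "x \<in> Or"
  have hyp: "\<forall>N\<ge>N0. (\<forall>x\<in>Omrh N Or - Omr0h N Or. U N x = u x) \<and>
         norm1h N Or (\<lambda>y. U N y - u y) \<le> Cs * hN N powr (2 + real CARD('n) / 2)"
    using U_sol by blast
  obtain M where M0: "M \<ge> 0" and bound: "\<forall>N\<ge>N0. \<forall>y\<in>Omrh N Or. \<bar>U N y - u y\<bar> \<le> M * hN N"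
    using disc_bound[OF Or_bounded N0_pos hyp] by blast
  have hrl: "hrl_upper N0 U y = ereal (u y) \<and> hrl_lower N0 U y = ereal (u y)" if "y \<in> Or" for y
    using hrl_eq[OF that Or_open Or_sub u_cont N0_pos bound M0] .
  have wl: "\<forall>y\<in>Or. real_of_ereal (hrl_lower N0 U y) = u y" using hrl by simp
  have wu: "\<forall>y\<in>Or. real_of_ereal (hrl_upper N0 U y) = u y" using hrl by simp
  have uv: "MA_visc_sol_at f u x" using u_visc x Or_sub by blast
  show "hrl_lower N0 U x = ereal (u x) \<and> hrl_upper N0 U x = ereal (u x) \<and>
           MA_visc_sol_at f (\<lambda>y. real_of_ereal (hrl_lower N0 U y)) x \<and>
           cvx_visc_sol_at (\<lambda>y. real_of_ereal (hrl_lower N0 U y)) x \<and>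
           MA_visc_sol_at f (\<lambda>y. real_of_ereal (hrl_upper N0 U y)) x \<and>
           cvx_visc_sol_at (\<lambda>y. real_of_ereal (hrl_upper N0 U y)) x"
    using hrl[OF x] visc_transfer[OF x Or_open Or_sub uv u_convex wl]
      visc_transfer[OF x Or_open Or_sub uv u_convex wu] by blast
qed

end
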